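(* With $\mathcal{L}^\ddagger$, $\Gamma_T$, $\Gamma_L$ as defined below and $\Gamma=2\Gamma_T+\Gamma_L$, if $e^{t\mathcal{L}^\ddagger}$ is a unital Schwarz map for every $t\ge 0$, then $\Gamma_T\le\frac23\Gamma$ and $\Gamma_L\le\frac23\Gamma$; in particular $4\Gamma_T\ge\Gamma_L$.
   Context: For $\omega,\gamma_+,\gamma_-,\gamma_z\in\mathbb{R}$, $\mathcal{L}^\ddagger:\mathcal{M}_2\to\mathcal{M}_2$ is $\mathcal{L}^\ddagger(X)=\tfrac{i\omega}{2}[\sigma_z,X]+\gamma_+(\sigma_-X\sigma_+-\tfrac12\{\sigma_-\sigma_+,X\})+\gamma_-(\sigma_+X\sigma_--\tfrac12\{\sigma_+\sigma_-,X\})+\gamma_z(\sigma_zX\sigma_z-X)$, where $\sigma_x,\sigma_y,\sigma_z$ are the Pauli matrices and $\sigma_\pm=\frac12(\sigma_x\pm i\sigma_y)$. $\Gamma_T=\frac{\gamma_++\gamma_-}{2}+2\gamma_z$, $\Gamma_L=\gamma_++\gamma_-$. A unital Schwarz map on $\mathcal{M}_n$ is a linear map $\Phi$ with $\Phi(\mathbb{1})=\mathbb{1}$ and $\Phi(X^\dagger X)\ge\Phi(X)^\dagger\Phi(X)$ for all $X$. *)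

theory Defs
  imports "HOL-Analysis.Analysis"
begin

type_synonym mat2 = "complex ^ 2 ^ 2"

definition m2 :: "complex \<Rightarrow> complex \<Rightarrow> complex \<Rightarrow> complex \<Rightarrow> mat2" where
  "m2 a b c d = (\<chi> i j. if i = 0 then (if j = 0 then a else b) else (if j = 0 then c else d))"

definition sigma_x :: mat2 where "sigma_x = m2 0 1 1 0"
definition sigma_y :: mat2 where "sigma_y = m2 0 (-\<i>) \<i> 0"
definition sigma_z :: mat2 where "sigma_z = m2 1 0 0 (-1)"
definition sigma_plus :: mat2 where "sigma_plus = (\<chi> i j. (sigma_x $ i $ j + \<i> * sigma_y $ i $ j) / 2)"
definition sigma_minus :: mat2 where "sigma_minus = (\<chi> i j. (sigma_x $ i $ j - \<i> * sigma_y $ i $ j) / 2)"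

definition adj :: "mat2 \<Rightarrow> mat2" where "adj A = (\<chi> i j. cnj (A $ j $ i))"
definition csmult :: "complex \<Rightarrow> mat2 \<Rightarrow> mat2" where "csmult c A = (\<chi> i j. c * A $ i $ j)"

definition comm :: "mat2 \<Rightarrow> mat2 \<Rightarrow> mat2" where "comm A B = A ** B - B ** A"
definition acomm :: "mat2 \<Rightarrow> mat2 \<Rightarrow> mat2" where "acomm A B = A ** B + B ** A"

definition psd :: "mat2 \<Rightarrow> bool" where
  "psd A = (\<forall>v :: complex ^ 2. let q = (\<Sum>i\<in>UNIV. cnj (v $ i) * (A *v v) $ i) in Im q = 0 \<and> Re q \<ge> 0)"

definition loewner_ge :: "mat2 \<Rightarrow> mat2 \<Rightarrow> bool" where
  "loewner_ge A B = psd (A - B)"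

definition clinear_map :: "(mat2 \<Rightarrow> mat2) \<Rightarrow> bool" where
  "clinear_map \<Phi> = ((\<forall>X Y. \<Phi> (X + Y) = \<Phi> X + \<Phi> Y) \<and> (\<forall>c X. \<Phi> (csmult c X) = csmult c (\<Phi> X)))"

definition unital_schwarz :: "(mat2 \<Rightarrow> mat2) \<Rightarrow> bool" where
  "unital_schwarz \<Phi> = (clinear_map \<Phi> \<and> \<Phi> (mat 1) = mat 1 \<and>
     (\<forall>X. loewner_ge (\<Phi> (adj X ** X)) (adj (\<Phi> X) ** \<Phi> X)))"

definition Ldag :: "real \<Rightarrow> real \<Rightarrow> real \<Rightarrow> real \<Rightarrow> mat2 \<Rightarrow> mat2" where
  "Ldag \<omega> gp gm gz X =
     csmult (\<i> * \<omega> / 2) (comm sigma_z X)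
   + csmult gp (sigma_minus ** X ** sigma_plus - csmult (1/2) (acomm (sigma_minus ** sigma_plus) X))
   + csmult gm (sigma_plus ** X ** sigma_minus - csmult (1/2) (acomm (sigma_plus ** sigma_minus) X))
   + csmult gz (sigma_z ** X ** sigma_z - X)"

definition sexp :: "real \<Rightarrow> (mat2 \<Rightarrow> mat2) \<Rightarrow> mat2 \<Rightarrow> mat2" where
  "sexp t L X = (\<Sum>n. (t ^ n / fact n) *\<^sub>R (L ^^ n) X)"

definition Gamma_T :: "real \<Rightarrow> real \<Rightarrow> real \<Rightarrow> real" where
  "Gamma_T gp gm gz = (gp + gm) / 2 + 2 * gz"
definition Gamma_L :: "real \<Rightarrow> real \<Rightarrow> real" where
  "Gamma_L gp gm = gp + gm"

end

theory Submission
  imports Defs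
begin

lemma two_cases: "(i::2) = 0 \<or> i = 1"
proof (induct i)
  case (of_int z)
  then have "z = 0 \<or> z = 1" by fastforce
  then show ?case by auto
qed

lemma one_ne_zero2[simp]: "(1::2) \<noteq> 0" by simp

lemma sum2: "sum f (UNIV::2 set) = f 0 + f 1"
proof -
  have "(UNIV::2 set) = {0,1}" using two_cases by auto
  then have "sum f (UNIV::2 set) = sum f {0,1}" by simp
  also have "\<dots> = f 0 + f 1" by simp
  finally show ?thesis .
qed

lemma forall2: "(\<forall>i::2. P i) \<longleftrightarrow> P 0 \<and> P 1"
  using two_cases by metis

lemma mat2_eq: "(A::mat2) = B \<longleftrightarrow> A$0$0 = B$0$0 \<and> A$0$1 = B$0$1 \<and> A$1$0 = B$1$0 \<and> A$1$1 = B$1$1"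
  by (auto simp: vec_eq_iff forall2)

lemma m2_nth[simp]: "m2 a b c d $ 0 $ 0 = a" "m2 a b c d $ 0 $ 1 = b" "m2 a b c d $ 1 $ 0 = c" "m2 a b c d $ 1 $ 1 = d"
  by (simp_all add: m2_def)

lemma mult_nth[simp]: "((A::mat2) ** B) $ i $ j = A$i$0 * B$0$j + A$i$1 * B$1$j"
  by (simp add: matrix_matrix_mult_def sum2)

lemma csmult_nth[simp]: "csmult c A $ i $ j = c * A $ i $ j" by (simp add: csmult_def)
lemma adj_nth[simp]: "adj A $ i $ j = cnj (A $ j $ i)" by (simp add: adj_def)
lemma mat1_nth[simp]: "(mat 1 :: mat2) $ 0 $ 0 = 1" "(mat 1 :: mat2) $ 0 $ 1 = 0" "(mat 1 :: mat2) $ 1 $ 0 = 0" "(mat 1 :: mat2) $ 1 $ 1 = 1"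
  by (simp_all add: mat_def)

lemmas sig_defs = sigma_x_def sigma_y_def sigma_z_def sigma_plus_def sigma_minus_def

lemma sp_nth[simp]: "sigma_plus $ 0 $ 0 = 0" "sigma_plus $ 0 $ 1 = 1" "sigma_plus $ 1 $ 0 = 0" "sigma_plus $ 1 $ 1 = 0"
  by (simp_all add: sig_defs)
lemma sm_nth[simp]: "sigma_minus $ 0 $ 0 = 0" "sigma_minus $ 0 $ 1 = 0" "sigma_minus $ 1 $ 0 = 1" "sigma_minus $ 1 $ 1 = 0"
  by (simp_all add: sig_defs)
lemma sz_nth[simp]: "sigma_z $ 0 $ 0 = 1" "sigma_z $ 0 $ 1 = 0" "sigma_z $ 1 $ 0 = 0" "sigma_z $ 1 $ 1 = -1"
  by (simp_all add: sig_defs)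

lemma Ldag_nth:
  "Ldag w gp gm gz X $ 0 $ 0 = gm * (X$1$1 - X$0$0)"
  "Ldag w gp gm gz X $ 0 $ 1 = (\<i> * w - Gamma_T gp gm gz) * X$0$1"
  "Ldag w gp gm gz X $ 1 $ 0 = (- \<i> * w - Gamma_T gp gm gz) * X$1$0"
  "Ldag w gp gm gz X $ 1 $ 1 = gp * (X$0$0 - X$1$1)"
  by (simp_all add: Ldag_def comm_def acomm_def Gamma_T_def algebra_simps)

lemma Ldag_csmult: "Ldag w gp gm gz (csmult a X) = csmult a (Ldag w gp gm gz X)"
  by (simp add: mat2_eq Ldag_nth algebra_simps)
lemma Ldag_zero: "Ldag w gp gm gz 0 = 0"
  by (simp add: mat2_eq Ldag_nth)

lemma Ldag_pow_eig:
  assumes "Ldag w gp gm gz X = csmult c X"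
  shows "(Ldag w gp gm gz ^^ n) X = csmult (c^n) X"
proof (induction n)
  case 0 then show ?case by (simp add: mat2_eq)
next
  case (Suc n)
  have "(Ldag w gp gm gz ^^ Suc n) X = Ldag w gp gm gz (csmult (c^n) X)" using Suc by simp
  also have "\<dots> = csmult (c^n) (csmult c X)" by (simp add: Ldag_csmult assms)
  also have "\<dots> = csmult (c^Suc n) X" by (simp add: mat2_eq)
  finally show ?case .
qed

lemma Ldag_pow_nil:
  assumes "Ldag w gp gm gz X = Y" "Ldag w gp gm gz Y = 0"
  shows "(Ldag w gp gm gz ^^ n) X = (if n = 0 then X else if n = 1 then Y else 0)"
proof (induction n)
  case 0 then show ?case by simp
next
  case (Suc n)
  then show ?case using assms by (cases "n = 0") (auto simp: Ldag_zero)
qed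

lemma vec_sumsI:
  fixes f :: "nat \<Rightarrow> 'a::real_normed_vector ^ 'n"
  assumes "\<And>i. (\<lambda>n. f n $ i) sums (a $ i)"
  shows "f sums a"
  using assms unfolding sums_def by (auto intro!: vec_tendstoI)

lemma sexp_eig:
  assumes "Ldag w gp gm gz X = csmult c X"
  shows "sexp t (Ldag w gp gm gz) X = csmult (exp (of_real t * c)) X"
proof -
  have "(\<lambda>n. (t ^ n / fact n) *\<^sub>R (Ldag w gp gm gz ^^ n) X) sums csmult (exp (of_real t * c)) X"
  proof (rule vec_sumsI, rule vec_sumsI)
    fix i j
    have "(\<lambda>n. X$i$j * ((of_real t * c)^n /\<^sub>R fact n)) sums (X$i$j * exp (of_real t * c))"
      by (rule sums_mult) (rule exp_converges)
    moreover have "\<And>n. X$i$j * ((of_real t * c)^n /\<^sub>R fact n) = ((t ^ n / fact n) *\<^sub>R (Ldag w gp gm gz ^^ n) X) $ i $ j"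
      by (simp only: vector_scaleR_component, simp add: Ldag_pow_eig[OF assms] scaleR_conv_of_real power_mult_distrib field_simps)
    ultimately show "(\<lambda>n. ((t ^ n / fact n) *\<^sub>R (Ldag w gp gm gz ^^ n) X) $ i $ j) sums (csmult (exp (of_real t * c)) X $ i $ j)"
      by (simp add: mult.commute)
  qed
  then show ?thesis unfolding sexp_def by (rule sums_unique[symmetric])
qed

lemma sexp_nil:
  assumes "Ldag w gp gm gz X = Y" "Ldag w gp gm gz Y = 0"
  shows "sexp t (Ldag w gp gm gz) X = X + t *\<^sub>R Y"
proof -
  have e: "(\<lambda>n. (t ^ n / fact n) *\<^sub>R (Ldag w gp gm gz ^^ n) X) = (\<lambda>n. (if n = 0 then X else 0) + (if n = 1 then t *\<^sub>R Y else 0))"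
    by (auto simp: Ldag_pow_nil[OF assms])
  have "(\<lambda>n. (if n = 0 then X else 0) + (if n = 1 then t *\<^sub>R Y else 0)) sums (X + t *\<^sub>R Y)"
    by (intro sums_add sums_single)
  then show ?thesis unfolding sexp_def e by (rule sums_unique[symmetric])
qed

lemma loewner_entry:
  assumes "loewner_ge A B"
  shows "Re (A$k$k) \<ge> Re (B$k$k)"
proof -
  define v :: "complex^2" where "v = (\<chi> i. if i = k then 1 else 0)"
  have "(\<Sum>i\<in>UNIV. cnj (v $ i) * ((A - B) *v v) $ i) = (A - B) $ k $ k"
    using two_cases[of k] by (auto simp: v_def matrix_vector_mult_def sum2)
  with assms show ?thesis unfolding loewner_ge_def psd_def Let_def by (metis minus_complex.sel(1) diff_ge_0_iff_ge vector_minus_component)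
qed

lemma clin_diff: "clinear_map F \<Longrightarrow> F (A - B) = F A - F B"
  unfolding clinear_map_def by (metis add_diff_cancel diff_add_cancel)

lemma cnj_exp_mult: "cnj (exp z) * exp z = of_real (exp (2 * Re z))"
  by (metis exp_cnj exp_add complex_add_cnj add.commute exp_of_real)

lemma lim_aux:
  fixes G gp c :: real
  assumes "G > 0" "\<forall>t>0. gp / (1 + t * G) \<le> c"
  shows "gp \<le> c"
proof -
  have "((\<lambda>t. gp / (1 + t * G)) \<longlongrightarrow> gp / (1 + 0 * G)) (at_right 0)"
    by (intro tendsto_intros) auto
  then have l: "((\<lambda>t. gp / (1 + t * G)) \<longlongrightarrow> gp) (at_right 0)" by simp
  have ev: "eventually (\<lambda>t. gp / (1 + t * G) \<le> c) (at_right (0::real))"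
    using assms(2) by (auto simp: eventually_at_right_less eventually_mono[OF eventually_at_right_less])
  show ?thesis
    by (rule tendsto_le[OF trivial_limit_at_right_real tendsto_const l ev])
qed

lemma exp_aux: "(y::real) \<ge> 0 \<Longrightarrow> y / (1 + y) \<le> 1 - exp (- y)"
proof -
  assume y: "y \<ge> 0"
  have "1 + y \<le> exp y" by (rule exp_ge_add_one_self)
  then have "exp (-y) \<le> 1 / (1 + y)" using y by (simp add: exp_minus field_simps)
  moreover have "1 / (1 + y) = 1 - y / (1 + y)" using y by (simp add: field_simps)
  ultimately show ?thesis by linarith
qed

lemma real_part:
  fixes gp gm T G :: real
  assumes G: "G \<noteq> 0" "G = gp + gm"
  and H: "\<And>t. t \<ge> 0 \<Longrightarrow> \<exists>a b a' b'. G*a = gm - exp(-t*G)*gm \<and> 0 \<le> a \<and> G*b = gm + exp(-t*G)*gp \<and> exp(-2*t*T) \<le> b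
        \<and> G*a' = gp - exp(-t*G)*gp \<and> 0 \<le> a' \<and> G*b' = gp + exp(-t*G)*gm \<and> exp(-2*t*T) \<le> b'"
  shows "0 \<le> gp \<and> 0 \<le> gm \<and> gp \<le> 2*T \<and> gm \<le> 2*T"
proof -
  obtain a b a' b' where h1: "G*a = gm - exp(-1*G)*gm" "0 \<le> a" "G*a' = gp - exp(-1*G)*gp" "0 \<le> a'"
    using H[of 1] by auto
  have sp: "G * (1 - exp (-G)) > 0"
  proof (cases "G > 0")
    case True then show ?thesis by simp
  next
    case False then have "G < 0" using G by simp
    then have "exp (-G) > 1" by simp
    then show ?thesis using \<open>G < 0\<close> by (simp add: mult_neg_neg)
  qed
  have "gm * (G * (1 - exp (-G))) = G * (G * a)" unfolding h1(1) by (simp add: algebra_simps)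
  also have "\<dots> \<ge> 0" using h1(2,4) by (metis mult.assoc zero_le_square mult_nonneg_nonneg)
  finally have gm0: "gm \<ge> 0" using sp by (simp add: zero_le_mult_iff)
  have "gp * (G * (1 - exp (-G))) = G * (G * a')" unfolding h1(3) by (simp add: algebra_simps)
  also have "\<dots> \<ge> 0" using h1(2,4) by (metis mult.assoc zero_le_square mult_nonneg_nonneg)
  finally have gp0: "gp \<ge> 0" using sp by (simp add: zero_le_mult_iff)
  have Gp: "G > 0" using G gm0 gp0 by simp
  have key: "x / (1 + t * G) \<le> 2 * T"
    if t: "t > 0" and x0: "x \<ge> 0" and y0: "y \<ge> 0" and xy: "G = x + y"
    and b: "G*b = y + exp(-t*G)*x" "exp(-2*t*T) \<le> b" for t x y b
  proof -
    have "1 - 2*t*T \<le> exp(-2*t*T)" using exp_ge_add_one_self[of "-2*t*T"] by simp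
    then have "1 - 2*t*T \<le> b" using b by linarith
    then have "G * (1 - 2*t*T) \<le> G * b" using Gp by (simp add: mult_left_mono)
    then have "x * (1 - exp(-t*G)) \<le> G * (2*t*T)" using b xy by (simp add: algebra_simps)
    moreover have "x * ((t*G) / (1 + t*G)) \<le> x * (1 - exp(-t*G))"
      using mult_left_mono[OF exp_aux[of "t*G"] x0] t Gp by simp
    ultimately have "x * ((t*G) / (1 + t*G)) \<le> (t*G) * (2*T)" by (simp add: algebra_simps)
    then have "(t*G) * (x / (1 + t*G)) \<le> (t*G) * (2*T)" by (simp add: algebra_simps)
    then show ?thesis using t Gp by (meson mult_left_le_imp_le mult_pos_pos)
  qed
  have "\<forall>t>0. gp / (1 + t * G) \<le> 2 * T"
  proof (intro allI impI)
    fix t :: real assume t: "t > 0"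
    then obtain b where "G*b = gm + exp(-t*G)*gp" "exp(-2*t*T) \<le> b" using H[of t] by auto
    then show "gp / (1 + t * G) \<le> 2 * T" using key[of t gp gm b] t gp0 gm0 G by simp
  qed
  then have A: "gp \<le> 2*T" using lim_aux Gp by blast
  have "\<forall>t>0. gm / (1 + t * G) \<le> 2 * T"
  proof (intro allI impI)
    fix t :: real assume t: "t > 0"
    then obtain b where "G*b = gp + exp(-t*G)*gm" "exp(-2*t*T) \<le> b" using H[of t] by auto
    then show "gm / (1 + t * G) \<le> 2 * T" using key[of t gm gp b] t gp0 gm0 G by simp
  qed
  then have B: "gm \<le> 2*T" using lim_aux Gp by blast
  show ?thesis using A B gp0 gm0 by simp
qed

lemma schwarz_facts:
  assumes "unital_schwarz (sexp t (Ldag w gp gm gz))"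
  shows "0 \<le> Re (sexp t (Ldag w gp gm gz) (m2 0 0 0 1) $0$0)
       \<and> exp(-2*t*Gamma_T gp gm gz) \<le> Re (sexp t (Ldag w gp gm gz) (m2 0 0 0 1) $1$1)
       \<and> 0 \<le> Re (sexp t (Ldag w gp gm gz) (m2 1 0 0 0) $1$1)
       \<and> exp(-2*t*Gamma_T gp gm gz) \<le> Re (sexp t (Ldag w gp gm gz) (m2 1 0 0 0) $0$0)"
proof -
  let ?L = "Ldag w gp gm gz" and ?T = "Gamma_T gp gm gz"
  let ?P = "sexp t ?L"
  have sch: "\<And>X. loewner_ge (?P (adj X ** X)) (adj (?P X) ** ?P X)"
    using assms unfolding unital_schwarz_def by blast
  have L12: "?L (m2 0 1 0 0) = csmult (\<i>*w - ?T) (m2 0 1 0 0)" by (simp add: mat2_eq Ldag_nth)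
  have L21: "?L (m2 0 0 1 0) = csmult (-\<i>*w - ?T) (m2 0 0 1 0)" by (simp add: mat2_eq Ldag_nth)
  have a12: "adj (m2 0 1 0 0) ** m2 0 1 0 0 = m2 0 0 0 1" by (simp add: mat2_eq)
  have a21: "adj (m2 0 0 1 0) ** m2 0 0 1 0 = m2 1 0 0 0" by (simp add: mat2_eq)
  have r1: "Re (exp (2 * Re (complex_of_real t * (\<i>*w - ?T)))) = exp(-2*t*?T)" by simp
  have r2: "Re (exp (2 * Re (complex_of_real t * (-\<i>*w - ?T)))) = exp(-2*t*?T)" by simp
  have s1: "loewner_ge (?P (m2 0 0 0 1)) (adj (csmult (exp (complex_of_real t * (\<i>*w - ?T))) (m2 0 1 0 0)) ** csmult (exp (complex_of_real t * (\<i>*w - ?T))) (m2 0 1 0 0))"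
    using sch[of "m2 0 1 0 0"] unfolding a12 sexp_eig[OF L12] .
  have s2: "loewner_ge (?P (m2 1 0 0 0)) (adj (csmult (exp (complex_of_real t * (-\<i>*w - ?T))) (m2 0 0 1 0)) ** csmult (exp (complex_of_real t * (-\<i>*w - ?T))) (m2 0 0 1 0))"
    using sch[of "m2 0 0 1 0"] unfolding a21 sexp_eig[OF L21] .
  show ?thesis
    using loewner_entry[OF s1, of 0] loewner_entry[OF s1, of 1] loewner_entry[OF s2, of 0] loewner_entry[OF s2, of 1]
    by (simp add: cnj_exp_mult r1 r2 mult.assoc del: Re_exp)
qed

theorem mainTheorem10:
  fixes \<omega> gp gm gz :: real
  assumes "\<forall>t\<ge>0. unital_schwarz (sexp t (Ldag \<omega> gp gm gz))"
  shows "Gamma_T gp gm gz \<le> 2/3 * (2 * Gamma_T gp gm gz + Gamma_L gp gm)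
       \<and> Gamma_L gp gm \<le> 2/3 * (2 * Gamma_T gp gm gz + Gamma_L gp gm)
       \<and> 4 * Gamma_T gp gm gz \<ge> Gamma_L gp gm"
proof -
  let ?L = "Ldag \<omega> gp gm gz" and ?T = "Gamma_T gp gm gz"
  define G where "G = gp + gm"
  have US: "\<And>t. t \<ge> 0 \<Longrightarrow> clinear_map (sexp t ?L) \<and> sexp t ?L (mat 1) = mat 1"
    using assms unfolding unital_schwarz_def by blast
  have SF: "\<And>t. t \<ge> 0 \<Longrightarrow> 0 \<le> Re (sexp t ?L (m2 0 0 0 1) $0$0)
       \<and> exp(-2*t*?T) \<le> Re (sexp t ?L (m2 0 0 0 1) $1$1)
       \<and> 0 \<le> Re (sexp t ?L (m2 1 0 0 0) $1$1)
       \<and> exp(-2*t*?T) \<le> Re (sexp t ?L (m2 1 0 0 0) $0$0)"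
    using assms schwarz_facts by blast
  have res: "0 \<le> gp \<and> 0 \<le> gm \<and> gp \<le> 2*?T \<and> gm \<le> 2*?T"
  proof (cases "G = 0")
    case False
    define D where "D = m2 gm 0 0 (-gp)"
    have LD: "?L D = csmult (- of_real G) D" by (simp add: D_def G_def mat2_eq Ldag_nth algebra_simps)
    show ?thesis
    proof (rule real_part[OF False G_def])
      fix t :: real assume t: "t \<ge> 0"
      let ?P = "sexp t ?L"
      have cl: "clinear_map ?P" and u: "?P (mat 1) = mat 1" using US[OF t] by auto
      have ee: "exp (complex_of_real t * - complex_of_real G) = of_real (exp (-t*G))"
        by (simp add: exp_of_real[symmetric])
      have PD: "?P D = csmult (of_real (exp (-t*G))) D" using sexp_eig[OF LD] ee by simp
      have e22: "csmult G (m2 0 0 0 1) = csmult gm (mat 1) - D" by (simp add: D_def G_def mat2_eq)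
      have e11: "csmult G (m2 1 0 0 0) = csmult gp (mat 1) + D" by (simp add: D_def G_def mat2_eq)
      have cs: "\<And>c X. ?P (csmult c X) = csmult c (?P X)" and ad: "\<And>X Y. ?P (X + Y) = ?P X + ?P Y"
        using cl unfolding clinear_map_def by auto
      have q22: "csmult G (?P (m2 0 0 0 1)) = csmult gm (mat 1) - csmult (of_real (exp (-t*G))) D"
        using arg_cong[OF e22, of ?P] by (simp add: cs clin_diff[OF cl] u PD)
      have q11: "csmult G (?P (m2 1 0 0 0)) = csmult gp (mat 1) + csmult (of_real (exp (-t*G))) D"
        using arg_cong[OF e11, of ?P] by (simp add: cs ad u PD)
      have f1: "G * Re (?P (m2 0 0 0 1) $0$0) = gm - exp(-t*G)*gm"
        using arg_cong[OF q22, of "\<lambda>M. Re (M$0$0)"] by (simp add: D_def)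
      have f2: "G * Re (?P (m2 0 0 0 1) $1$1) = gm + exp(-t*G)*gp"
        using arg_cong[OF q22, of "\<lambda>M. Re (M$1$1)"] by (simp add: D_def)
      have f3: "G * Re (?P (m2 1 0 0 0) $1$1) = gp - exp(-t*G)*gp"
        using arg_cong[OF q11, of "\<lambda>M. Re (M$1$1)"] by (simp add: D_def)
      have f4: "G * Re (?P (m2 1 0 0 0) $0$0) = gp + exp(-t*G)*gm"
        using arg_cong[OF q11, of "\<lambda>M. Re (M$0$0)"] by (simp add: D_def)
      show "\<exists>a b a' b'. G*a = gm - exp(-t*G)*gm \<and> 0 \<le> a \<and> G*b = gm + exp(-t*G)*gp \<and> exp(-2*t*?T) \<le> b
        \<and> G*a' = gp - exp(-t*G)*gp \<and> 0 \<le> a' \<and> G*b' = gp + exp(-t*G)*gm \<and> exp(-2*t*?T) \<le> b'"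
        using f1 f2 f3 f4 SF[OF t] by blast
    qed
  next
    case True
    then have gpm: "gp = - gm" by (simp add: G_def)
    have L22: "?L (m2 0 0 0 1) = csmult gm (mat 1)" using gpm by (simp add: mat2_eq Ldag_nth)
    have L11: "?L (m2 1 0 0 0) = csmult gp (mat 1)" using gpm by (simp add: mat2_eq Ldag_nth)
    have Z1: "?L (csmult gm (mat 1)) = 0" by (simp add: mat2_eq Ldag_nth)
    have Z2: "?L (csmult gp (mat 1)) = 0" by (simp add: mat2_eq Ldag_nth)
    have h: "0 \<le> Re (sexp 1 ?L (m2 0 0 0 1) $0$0) \<and> exp(-2*1*?T) \<le> Re (sexp 1 ?L (m2 0 0 0 1) $1$1)
       \<and> 0 \<le> Re (sexp 1 ?L (m2 1 0 0 0) $1$1)" using SF[of 1] by simp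
    then have "0 \<le> gm \<and> exp(-2*?T) \<le> 1 + gm \<and> 0 \<le> gp"
      unfolding sexp_nil[OF L22 Z1] sexp_nil[OF L11 Z2] by simp
    then have "gm = 0" "gp = 0" "exp(-2*?T) \<le> 1" using gpm by auto
    then show ?thesis by simp
  qed
  then have a: "0 \<le> gp" "0 \<le> gm" "gp \<le> 2*?T" "gm \<le> 2*?T" by auto
  have b1: "?T \<le> 2/3 * (2 * ?T + (gp + gm))" using a by (simp add: field_simps)
  have b2: "gp + gm \<le> 2/3 * (2 * ?T + (gp + gm))" using a by (simp add: field_simps)
  have b3: "gp + gm \<le> 4 * ?T" using a by (smt (verit))
  show ?thesis unfolding Gamma_L_def using b1 b2 b3 by blast
qed

end
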